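(* Let $(M,d)$ be a metric space in which any two points $A,B\in M$ are joined by a unique metric segment $[A,B]$. Then the following two conditions are equivalent. Condition (A): for any three distinct points $A,B,C\in M$ there exists a unique $O\in M$ such that $\{X,Y\}\subset\mathcal C_d(Z,O)$ for all distinct $X,Y,Z\in\{A,B,C\}$. Condition (B): for any three distinct points $A,B,C\in M$ there exists $O\in M$ such that $[A,B]\cap[B,C]\cap[A,C]=\{O\}$.
   Context: For a metric space $(M,d)$ and $A,B\in M$, the metric segment is $[A,B]=\{X\in M:\ d(A,X)+d(X,B)=d(A,B)<+\infty\}$. For $A,B\in M$, $\mathcal C_d(A,B)=\{X\in M:\ d(X,A)=d(X,B)+d(A,B)<+\infty\}$. *)

theory Defs
  imports "HOL-Analysis.Analysis"
begin

definition metric_segment :: "'a set \<Rightarrow> ('a \<Rightarrow> 'a \<Rightarrow> real) \<Rightarrow> 'a \<Rightarrow> 'a \<Rightarrow> 'a set" where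
  "metric_segment M d A B = {X \<in> M. d A X + d X B = d A B}"

definition Cd :: "'a set \<Rightarrow> ('a \<Rightarrow> 'a \<Rightarrow> real) \<Rightarrow> 'a \<Rightarrow> 'a \<Rightarrow> 'a set" where
  "Cd M d A B = {X \<in> M. d X A = d X B + d A B}"

end

theory Submission
  imports Defs
begin

lemma key:
  fixes M :: "'a set" and d :: "'a \<Rightarrow> 'a \<Rightarrow> real"
  assumes ms: "Metric_space M d" and AM: "A\<in>M" and BM: "B\<in>M" and CM: "C\<in>M"
    and dist: "A \<noteq> B" "B \<noteq> C" "A \<noteq> C"
  shows "(P \<in> M \<and>
               (\<forall>X\<in>{A,B,C}. \<forall>Y\<in>{A,B,C}. \<forall>Z\<in>{A,B,C}.
                  X \<noteq> Y \<and> Y \<noteq> Z \<and> X \<noteq> Z \<longrightarrow> {X, Y} \<subseteq> Cd M d Z P))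
     \<longleftrightarrow> P \<in> metric_segment M d A B \<inter> metric_segment M d B C \<inter> metric_segment M d A C"
proof -
  have c: "\<And>x y. x \<in> M \<Longrightarrow> y \<in> M \<Longrightarrow> d x y = d y x"
    using ms Metric_space.commute by metis
  show ?thesis
  proof
    assume h: "P \<in> M \<and>
               (\<forall>X\<in>{A,B,C}. \<forall>Y\<in>{A,B,C}. \<forall>Z\<in>{A,B,C}.
                  X \<noteq> Y \<and> Y \<noteq> Z \<and> X \<noteq> Z \<longrightarrow> {X, Y} \<subseteq> Cd M d Z P)"
    then have PM: "P \<in> M" by simp
    from h have 1: "{A,C} \<subseteq> Cd M d B P" using dist by auto
    from h have 2: "{B,A} \<subseteq> Cd M d C P" using dist by auto
    from h have 3: "{B,C} \<subseteq> Cd M d A P" using dist by auto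
    have e: "d A B = d A P + d B P" "d B C = d B P + d C P" "d A C = d A P + d C P"
      using 1 2 3 unfolding Cd_def by auto
    have cc: "d B P = d P B" "d C P = d P C" using c BM CM PM by auto
    show "P \<in> metric_segment M d A B \<inter> metric_segment M d B C \<inter> metric_segment M d A C"
      unfolding metric_segment_def using e cc PM by simp
  next
    assume h: "P \<in> metric_segment M d A B \<inter> metric_segment M d B C \<inter> metric_segment M d A C"
    then have PM: "P \<in> M" unfolding metric_segment_def by auto
    have e: "d A P + d P B = d A B" "d B P + d P C = d B C" "d A P + d P C = d A C"
      using h unfolding metric_segment_def by auto
    have cc: "d B P = d P B" "d C P = d P C" "d A P = d P A" "d B A = d A B" "d C B = d B C" "d C A = d A C"
      using c AM BM CM PM by auto
    have s: "\<And>X Z. X \<in> {A,B,C} \<Longrightarrow> Z \<in> {A,B,C} \<Longrightarrow> X \<noteq> Z \<Longrightarrow> X \<in> Cd M d Z P"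
    proof -
      fix X Z assume "X \<in> {A,B,C}" "Z \<in> {A,B,C}" "X \<noteq> Z"
      then show "X \<in> Cd M d Z P" unfolding Cd_def using e cc AM BM CM by auto
    qed
    show "P \<in> M \<and>
               (\<forall>X\<in>{A,B,C}. \<forall>Y\<in>{A,B,C}. \<forall>Z\<in>{A,B,C}.
                  X \<noteq> Y \<and> Y \<noteq> Z \<and> X \<noteq> Z \<longrightarrow> {X, Y} \<subseteq> Cd M d Z P)"
      using PM s by blast
  qed
qed

theorem lemma2p1:
  fixes M :: "'a set" and d :: "'a \<Rightarrow> 'a \<Rightarrow> real"
  assumes "Metric_space M d"
  shows "(\<forall>A\<in>M. \<forall>B\<in>M. \<forall>C\<in>M. A \<noteq> B \<and> B \<noteq> C \<and> A \<noteq> C \<longrightarrow>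
            (\<exists>!P. P \<in> M \<and>
               (\<forall>X\<in>{A,B,C}. \<forall>Y\<in>{A,B,C}. \<forall>Z\<in>{A,B,C}.
                  X \<noteq> Y \<and> Y \<noteq> Z \<and> X \<noteq> Z \<longrightarrow> {X, Y} \<subseteq> Cd M d Z P)))
     \<longleftrightarrow>
         (\<forall>A\<in>M. \<forall>B\<in>M. \<forall>C\<in>M. A \<noteq> B \<and> B \<noteq> C \<and> A \<noteq> C \<longrightarrow>
            (\<exists>P\<in>M. metric_segment M d A B \<inter> metric_segment M d B C \<inter> metric_segment M d A C = {P}))"
proof -
  have ex1: "\<And>S. S \<subseteq> M \<Longrightarrow> (\<exists>!P. P \<in> S) \<longleftrightarrow> (\<exists>P\<in>M. S = {P})"
  proof -
    fix S :: "'a set" assume sM: "S \<subseteq> M"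
    show "(\<exists>!P. P \<in> S) \<longleftrightarrow> (\<exists>P\<in>M. S = {P})"
    proof
      assume "\<exists>!P. P \<in> S"
      then obtain P where P: "P \<in> S" and u: "\<And>Q. Q \<in> S \<Longrightarrow> Q = P" by (elim ex1E) blast
      have "S = {P}" using P u by blast
      moreover have "P \<in> M" using P sM by blast
      ultimately show "\<exists>P\<in>M. S = {P}" by blast
    next
      assume "\<exists>P\<in>M. S = {P}"
      then obtain P where "S = {P}" by blast
      then show "\<exists>!P. P \<in> S" by simp
    qed
  qed
  have sM: "\<And>A B C. metric_segment M d A B \<inter> metric_segment M d B C \<inter> metric_segment M d A C \<subseteq> M"
    unfolding metric_segment_def by auto
  have eq: "(\<exists>!P. P \<in> M \<and>
               (\<forall>X\<in>{A,B,C}. \<forall>Y\<in>{A,B,C}. \<forall>Z\<in>{A,B,C}.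
                  X \<noteq> Y \<and> Y \<noteq> Z \<and> X \<noteq> Z \<longrightarrow> {X, Y} \<subseteq> Cd M d Z P))
     \<longleftrightarrow> (\<exists>P\<in>M. metric_segment M d A B \<inter> metric_segment M d B C \<inter> metric_segment M d A C = {P})"
    if a: "A\<in>M" "B\<in>M" "C\<in>M" "A \<noteq> B \<and> B \<noteq> C \<and> A \<noteq> C" for A B C
  proof -
    have k: "\<And>P. (P \<in> M \<and>
               (\<forall>X\<in>{A,B,C}. \<forall>Y\<in>{A,B,C}. \<forall>Z\<in>{A,B,C}.
                  X \<noteq> Y \<and> Y \<noteq> Z \<and> X \<noteq> Z \<longrightarrow> {X, Y} \<subseteq> Cd M d Z P)) \<longleftrightarrow>
          P \<in> metric_segment M d A B \<inter> metric_segment M d B C \<inter> metric_segment M d A C"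
      using a(4) by (intro key[OF assms a(1-3)]) auto
    show ?thesis unfolding k using ex1[OF sM] .
  qed
  show ?thesis
  proof (intro iffI ballI impI)
    fix A B C assume L: "\<forall>A\<in>M. \<forall>B\<in>M. \<forall>C\<in>M. A \<noteq> B \<and> B \<noteq> C \<and> A \<noteq> C \<longrightarrow>
            (\<exists>!P. P \<in> M \<and>
               (\<forall>X\<in>{A,B,C}. \<forall>Y\<in>{A,B,C}. \<forall>Z\<in>{A,B,C}.
                  X \<noteq> Y \<and> Y \<noteq> Z \<and> X \<noteq> Z \<longrightarrow> {X, Y} \<subseteq> Cd M d Z P))"
      and a: "A\<in>M" "B\<in>M" "C\<in>M" "A \<noteq> B \<and> B \<noteq> C \<and> A \<noteq> C"
    have "\<exists>!P. P \<in> M \<and>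
               (\<forall>X\<in>{A,B,C}. \<forall>Y\<in>{A,B,C}. \<forall>Z\<in>{A,B,C}.
                  X \<noteq> Y \<and> Y \<noteq> Z \<and> X \<noteq> Z \<longrightarrow> {X, Y} \<subseteq> Cd M d Z P)"
      by (rule L[rule_format, OF a])
    then show "\<exists>P\<in>M. metric_segment M d A B \<inter> metric_segment M d B C \<inter> metric_segment M d A C = {P}"
      using eq[OF a] by simp
  next
    fix A B C assume R: "\<forall>A\<in>M. \<forall>B\<in>M. \<forall>C\<in>M. A \<noteq> B \<and> B \<noteq> C \<and> A \<noteq> C \<longrightarrow>
            (\<exists>P\<in>M. metric_segment M d A B \<inter> metric_segment M d B C \<inter> metric_segment M d A C = {P})"
      and a: "A\<in>M" "B\<in>M" "C\<in>M" "A \<noteq> B \<and> B \<noteq> C \<and> A \<noteq> C"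
    have "\<exists>P\<in>M. metric_segment M d A B \<inter> metric_segment M d B C \<inter> metric_segment M d A C = {P}"
      by (rule R[rule_format, OF a])
    then show "\<exists>!P. P \<in> M \<and>
               (\<forall>X\<in>{A,B,C}. \<forall>Y\<in>{A,B,C}. \<forall>Z\<in>{A,B,C}.
                  X \<noteq> Y \<and> Y \<noteq> Z \<and> X \<noteq> Z \<longrightarrow> {X, Y} \<subseteq> Cd M d Z P)"
      using eq[OF a] by simp
  qed
qed

end
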